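(* Let $I\subset(0,\infty)$ be an open interval and $K\mapsto\theta^*(K)$, $K\in I$, a continuously differentiable family of stable phase-locked steady states of the Kuramoto network with coupling strength $K$. Let $\lambda_n(K)$, $v_n(K)$ ($n=2,\dots,N$) be the nonzero eigenvalues of the Jacobian $J(K)$ at $\theta^*(K)$ and corresponding orthonormal eigenvectors. Then for every $K\in I$ $$\frac{d r_{\rm uni}(\theta^*(K))}{dK}=\frac{2}{K^2\sum_{i=1}^N k_i}\sum_{n=2}^N\frac{1}{-\lambda_n(K)}\,\big(v_n(K)\cdot\omega\big)^2\;\ge\;0,$$ where $\omega=(\omega_1,\dots,\omega_N)^T$.
   Context: Kuramoto network: $N\ge 2$ oscillators with phases $\theta_i(t)$ obeying $\frac{d\theta_i}{dt}=\omega_i+K\sum_{j=1}^N A_{i,j}\sin(\theta_j-\theta_i)$, where $\omega_i\in\mathbb{R}$ are natural frequencies with $\sum_{i=1}^N\omega_i=0$, $K>0$ is the coupling strength, and $A=(A_{i,j})$ is the symmetric adjacency matrix ($A_{i,j}=A_{j,i}\in\{0,1\}$, $A_{i,i}=0$) of a connected undirected graph; $k_i=\sum_j A_{i,j}$ is the degree of node $i$. A phase-locked steady state is a vector $\theta^*\in\mathbb{R}^N$ with $\omega_i+K\sum_j A_{i,j}\sin(\theta_j^*-\theta_i^* )=0$ for all $i$. Its Jacobian $J$ is the symmetric matrix with $J_{i,j}=KA_{i,j}\cos(\theta_i^*-\theta_j^* )$ for $i\neq j$ and $J_{i,i}=-K\sum_j A_{i,j}\cos(\theta_i^*-\theta_j^*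 )$; it always has eigenvalue $\lambda_1=0$ with eigenvector $(1,\dots,1)^T$. The state is called stable if all remaining eigenvalues $\lambda_2,\dots,\lambda_N$ of $J$ are strictly negative; then $0=\lambda_1>\lambda_2\ge\dots\ge\lambda_N$, with an orthonormal eigenbasis $v_1=(1,\dots,1)^T/\sqrt N, v_2,\dots,v_N$. The order parameter is $r_{\rm uni}=\frac{1}{\sum_i k_i}\sum_{i,j}A_{i,j}\langle\cos(\theta_i-\theta_j)\rangle_t$, which for a steady state equals $r_{\rm uni}(\theta^* )=\frac{1}{\sum_i k_i}\sum_{i,j}A_{i,j}\cos(\theta_i^*-\theta_j^* )$. *)

theory Defs
  imports "HOL-Analysis.Analysis"
begin

text \<open>Oscillators are indexed by 1..N; the adjacency matrix A, natural frequencies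
  omega and phases theta are functions on indices (only values on 1..N matter).\<close>

definition adjacency_ok :: "nat \<Rightarrow> (nat \<Rightarrow> nat \<Rightarrow> real) \<Rightarrow> bool" where
  "adjacency_ok N A \<longleftrightarrow>
     (\<forall>i\<in>{1..N}. \<forall>j\<in>{1..N}. (A i j = 0 \<or> A i j = 1) \<and> A i j = A j i) \<and>
     (\<forall>i\<in>{1..N}. A i i = 0)"

definition graph_connected :: "nat \<Rightarrow> (nat \<Rightarrow> nat \<Rightarrow> real) \<Rightarrow> bool" where
  "graph_connected N A \<longleftrightarrow>
     (\<forall>i\<in>{1..N}. \<forall>j\<in>{1..N}.
        (i, j) \<in> rtrancl {(a, b). a \<in> {1..N} \<and> b \<in> {1..N} \<and> A a b = 1})"

definition degree :: "nat \<Rightarrow> (nat \<Rightarrow> nat \<Rightarrow> real) \<Rightarrow> nat \<Rightarrow> real" where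
  "degree N A i = (\<Sum>j=1..N. A i j)"

definition steady_state ::
  "nat \<Rightarrow> (nat \<Rightarrow> nat \<Rightarrow> real) \<Rightarrow> (nat \<Rightarrow> real) \<Rightarrow> real \<Rightarrow> (nat \<Rightarrow> real) \<Rightarrow> bool" where
  "steady_state N A \<omega> K \<theta> \<longleftrightarrow>
     (\<forall>i\<in>{1..N}. \<omega> i + K * (\<Sum>j=1..N. A i j * sin (\<theta> j - \<theta> i)) = 0)"

definition jac :: "nat \<Rightarrow> (nat \<Rightarrow> nat \<Rightarrow> real) \<Rightarrow> real \<Rightarrow> (nat \<Rightarrow> real) \<Rightarrow> nat \<Rightarrow> nat \<Rightarrow> real" where
  "jac N A K \<theta> i j =
     (if i = j then - K * (\<Sum>l=1..N. A i l * cos (\<theta> i - \<theta> l))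
      else K * A i j * cos (\<theta> i - \<theta> j))"

definition jac_apply ::
  "nat \<Rightarrow> (nat \<Rightarrow> nat \<Rightarrow> real) \<Rightarrow> real \<Rightarrow> (nat \<Rightarrow> real) \<Rightarrow> (nat \<Rightarrow> real) \<Rightarrow> nat \<Rightarrow> real" where
  "jac_apply N A K \<theta> x i = (\<Sum>j=1..N. jac N A K \<theta> i j * x j)"

definition is_eigenpair ::
  "nat \<Rightarrow> (nat \<Rightarrow> nat \<Rightarrow> real) \<Rightarrow> real \<Rightarrow> (nat \<Rightarrow> real) \<Rightarrow> real \<Rightarrow> (nat \<Rightarrow> real) \<Rightarrow> bool" where
  "is_eigenpair N A K \<theta> \<mu> x \<longleftrightarrow>
     (\<exists>i\<in>{1..N}. x i \<noteq> 0) \<and> (\<forall>i\<in>{1..N}. jac_apply N A K \<theta> x i = \<mu> * x i)"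

text \<open>Stability: apart from the trivial eigenvalue 0 with eigenvector (1,...,1)
  (which must be simple), all eigenvalues of the symmetric Jacobian are strictly negative.
  For a symmetric matrix algebraic and geometric multiplicities agree, so this says
  exactly that the remaining eigenvalues lambda_2..lambda_N are negative.\<close>
definition stable ::
  "nat \<Rightarrow> (nat \<Rightarrow> nat \<Rightarrow> real) \<Rightarrow> real \<Rightarrow> (nat \<Rightarrow> real) \<Rightarrow> bool" where
  "stable N A K \<theta> \<longleftrightarrow>
     (\<forall>\<mu> x. is_eigenpair N A K \<theta> \<mu> x \<longrightarrow>
        \<mu> < 0 \<or> (\<mu> = 0 \<and> (\<forall>i\<in>{1..N}. \<forall>j\<in>{1..N}. x i = x j)))"

definition r_uni :: "nat \<Rightarrow> (nat \<Rightarrow> nat \<Rightarrow> real) \<Rightarrow> (nat \<Rightarrow> real) \<Rightarrow> real" where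
  "r_uni N A \<theta> = (1 / (\<Sum>i=1..N. degree N A i)) *
     (\<Sum>i=1..N. \<Sum>j=1..N. A i j * cos (\<theta> i - \<theta> j))"

end

theory Submission
  imports Defs "Jordan_Normal_Form.Determinant"
begin

lemma ortho_complete:
  fixes u :: "nat \<Rightarrow> nat \<Rightarrow> real"
  assumes on: "\<forall>r\<in>{1..N}. \<forall>s\<in>{1..N}. (\<Sum>j=1..N. u r j * u s j) = (if r = s then 1 else 0)"
    and i: "i \<in> {1..N}" and j: "j \<in> {1..N}"
  shows "(\<Sum>r=1..N. u r i * u r j) = (if i = j then 1 else 0)"
proof -
  define M where "M = mat N N (\<lambda>(r,j). u (r+1) (j+1))"
  have Mc: "M \<in> carrier_mat N N" "transpose_mat M \<in> carrier_mat N N" unfolding M_def by auto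
  have "M * transpose_mat M = 1\<^sub>m N"
  proof (rule eq_matI)
    fix a b assume ab: "a < dim_row (1\<^sub>m N)" "b < dim_col (1\<^sub>m N)"
    have "(M * transpose_mat M) $$ (a,b) = (\<Sum>k<N. u (a+1) (k+1) * u (b+1) (k+1))"
      using ab unfolding M_def by (simp add: scalar_prod_def lessThan_atLeast0)
    also have "\<dots> = (\<Sum>k=1..N. u (a+1) k * u (b+1) k)"
      using sum_bounds_lt_plus1[of "\<lambda>k. u (a+1) k * u (b+1) k" N] by simp
    also have "\<dots> = (if a = b then 1 else 0)" using on ab by auto
    finally show "(M * transpose_mat M) $$ (a,b) = 1\<^sub>m N $$ (a,b)" using ab by simp
  qed (use Mc in auto)
  hence T: "transpose_mat M * M = 1\<^sub>m N" using mat_mult_left_right_inverse[OF Mc] by blast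
  have "(transpose_mat M * M) $$ (i-1,j-1) = (\<Sum>k<N. u (k+1) i * u (k+1) j)"
  proof -
    have ij: "i-1 < N" "j-1<N" "Suc (i-1) = i" "Suc (j-1) = j" using i j by auto
    show ?thesis unfolding M_def using ij by (simp add: scalar_prod_def lessThan_atLeast0 del: Suc_pred)
  qed
  also have "\<dots> = (\<Sum>r=1..N. u r i * u r j)"
    using sum_bounds_lt_plus1[of "\<lambda>k. u k i * u k j" N] by simp
  finally show ?thesis using T i j by (auto split: if_splits)
qed


lemma jac_apply_eq:
  assumes adj: "adjacency_ok N A" and i: "i \<in> {1..N}"
  shows "jac_apply N A K \<theta> x i = K * (\<Sum>j=1..N. A i j * cos (\<theta> i - \<theta> j) * (x j - x i))"
proof -
  have Aii: "A i i = 0" using adj i unfolding adjacency_ok_def by auto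
  have "jac_apply N A K \<theta> x i = (\<Sum>j=1..N. K * A i j * cos (\<theta> i - \<theta> j) * x j
        - (if i = j then K * (\<Sum>l=1..N. A i l * cos (\<theta> i - \<theta> l)) * x i else 0))"
    unfolding jac_apply_def jac_def by (rule sum.cong) (auto simp: Aii)
  also have "\<dots> = (\<Sum>j=1..N. K * A i j * cos (\<theta> i - \<theta> j) * x j)
        - K * (\<Sum>l=1..N. A i l * cos (\<theta> i - \<theta> l)) * x i"
    using i by (simp add: sum_subtractf)
  also have "\<dots> = K * (\<Sum>j=1..N. A i j * cos (\<theta> i - \<theta> j) * (x j - x i))"
    by (simp add: algebra_simps sum_subtractf sum_distrib_left sum_distrib_right)
  finally show ?thesis .
qed

lemma jac_sym:
  assumes adj: "adjacency_ok N A"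
  shows "(\<Sum>i=1..N. y i * jac_apply N A K \<theta> x i) = (\<Sum>i=1..N. x i * jac_apply N A K \<theta> y i)"
proof -
  have js: "jac N A K \<theta> i j = jac N A K \<theta> j i" if "i \<in> {1..N}" "j \<in> {1..N}" for i j
  proof -
    have "A i j = A j i" using adj that unfolding adjacency_ok_def by auto
    moreover have "cos (\<theta> i - \<theta> j) = cos (\<theta> j - \<theta> i)" by (metis cos_minus minus_diff_eq)
    ultimately show ?thesis unfolding jac_def by auto
  qed
  have "(\<Sum>i=1..N. y i * jac_apply N A K \<theta> x i) = (\<Sum>i=1..N. \<Sum>j=1..N. y i * jac N A K \<theta> i j * x j)"
    unfolding jac_apply_def by (simp add: sum_distrib_left mult.assoc)
  also have "\<dots> = (\<Sum>j=1..N. \<Sum>i=1..N. y i * jac N A K \<theta> i j * x j)" by (rule sum.swap)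
  also have "\<dots> = (\<Sum>j=1..N. x j * jac_apply N A K \<theta> y j)"
    unfolding jac_apply_def sum_distrib_left
    by (intro sum.cong refl) (auto simp: js mult.commute mult.left_commute)
  finally show ?thesis .
qed

theorem lemma2:
  fixes N :: nat and A :: "nat \<Rightarrow> nat \<Rightarrow> real" and \<omega> :: "nat \<Rightarrow> real"
    and I :: "real set" and \<theta> :: "real \<Rightarrow> nat \<Rightarrow> real"
    and K0 :: real and lam :: "nat \<Rightarrow> real" and v :: "nat \<Rightarrow> nat \<Rightarrow> real"
  assumes N2: "N \<ge> 2"
    and adj: "adjacency_ok N A"
    and conn: "graph_connected N A"
    and omega_sum: "(\<Sum>i=1..N. \<omega> i) = 0"
    and I_open: "open I" and I_int: "is_interval I" and I_ne: "I \<noteq> {}"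
    and I_pos: "I \<subseteq> {0<..}"
    and C1: "\<forall>i\<in>{1..N}. \<exists>\<theta>'. (\<forall>K\<in>I. ((\<lambda>K. \<theta> K i) has_real_derivative \<theta>' K) (at K))
                              \<and> continuous_on I \<theta>'"
    and steady: "\<forall>K\<in>I. steady_state N A \<omega> K (\<theta> K)"
    and stab: "\<forall>K\<in>I. stable N A K (\<theta> K)"
    and K0: "K0 \<in> I"
    and eig: "\<forall>n\<in>{2..N}. lam n \<noteq> 0 \<and> (\<forall>i\<in>{1..N}. jac_apply N A K0 (\<theta> K0) (v n) i = lam n * v n i)"
    and orth: "\<forall>n\<in>{2..N}. \<forall>m\<in>{2..N}. (\<Sum>i=1..N. v n i * v m i) = (if n = m then 1 else 0)"
  shows "((\<lambda>K. r_uni N A (\<theta> K)) has_real_derivative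
            (2 / (K0^2 * (\<Sum>i=1..N. degree N A i)) *
              (\<Sum>n=2..N. (1 / (- lam n)) * (\<Sum>i=1..N. v n i * \<omega> i)^2))) (at K0)
       \<and> 2 / (K0^2 * (\<Sum>i=1..N. degree N A i)) *
              (\<Sum>n=2..N. (1 / (- lam n)) * (\<Sum>i=1..N. v n i * \<omega> i)^2) \<ge> 0"
  proof -
  define \<theta>0 where "\<theta>0 = \<theta> K0"
  define S where "S = (\<Sum>i=1..N. degree N A i)"
  have K0pos: "K0 > 0" using K0 I_pos by auto
  from C1 have "\<forall>i\<in>{1..N}. \<exists>d. ((\<lambda>K. \<theta> K i) has_real_derivative d) (at K0)" using K0 by blast
  then obtain d where d: "\<And>i. i \<in> {1..N} \<Longrightarrow> ((\<lambda>K. \<theta> K i) has_real_derivative d i) (at K0)"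
    by metis
  have cosc: "cos (a - b) = cos (b - a)" for a b :: real by (metis cos_minus minus_diff_eq)
  have A01: "A i j = 0 \<or> A i j = 1" "A i j = A j i" if "i \<in> {1..N}" "j \<in> {1..N}" for i j
    using adj that unfolding adjacency_ok_def by auto
  have Dij: "((\<lambda>K. A i j * cos (\<theta> K i - \<theta> K j)) has_real_derivative
          A i j * (- sin (\<theta>0 i - \<theta>0 j) * (d i - d j))) (at K0)"
    if "i \<in> {1..N}" "j \<in> {1..N}" for i j
    unfolding \<theta>0_def by (intro DERIV_cmult DERIV_fun_cos DERIV_diff d that)
  have Di: "((\<lambda>K. \<Sum>j=1..N. A i j * cos (\<theta> K i - \<theta> K j)) has_real_derivative
          (\<Sum>j=1..N. A i j * (- sin (\<theta>0 i - \<theta>0 j) * (d i - d j)))) (at K0)"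
    if "i \<in> {1..N}" for i
    by (rule DERIV_sum) (rule Dij[OF that])
  have Dr: "((\<lambda>K. r_uni N A (\<theta> K)) has_real_derivative
      (1/S) * (\<Sum>i=1..N. \<Sum>j=1..N. A i j * (- sin (\<theta>0 i - \<theta>0 j) * (d i - d j)))) (at K0)"
    unfolding r_uni_def S_def[symmetric]
    by (rule DERIV_cmult, rule DERIV_sum, rule Di)
  \<comment> \<open>differentiating the steady state condition\<close>
  have Jd: "jac_apply N A K0 \<theta>0 d i = \<omega> i / K0" if i: "i \<in> {1..N}" for i
  proof -
    define g where "g K = \<omega> i + K * (\<Sum>j=1..N. A i j * sin (\<theta> K j - \<theta> K i))" for K
    have Ds: "((\<lambda>K. \<Sum>j=1..N. A i j * sin (\<theta> K j - \<theta> K i)) has_real_derivative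
          (\<Sum>j=1..N. A i j * (cos (\<theta>0 j - \<theta>0 i) * (d j - d i)))) (at K0)"
    proof (rule DERIV_sum)
      fix j assume "j \<in> {1..N}"
      then show "((\<lambda>K. A i j * sin (\<theta> K j - \<theta> K i)) has_real_derivative
          A i j * (cos (\<theta>0 j - \<theta>0 i) * (d j - d i))) (at K0)"
        unfolding \<theta>0_def by (intro DERIV_cmult DERIV_fun_sin DERIV_diff d i \<open>j \<in> {1..N}\<close>)
    qed
    have g': "(g has_real_derivative (\<Sum>j=1..N. A i j * sin (\<theta>0 j - \<theta>0 i))
        + K0 * (\<Sum>j=1..N. A i j * (cos (\<theta>0 j - \<theta>0 i) * (d j - d i)))) (at K0)"
      unfolding g_def
      by (rule DERIV_cong[OF DERIV_add[OF DERIV_const DERIV_mult[OF DERIV_ident Ds]]])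
         (simp add: \<theta>0_def algebra_simps)
    have gz: "g K = 0" if "K \<in> I" for K using steady i that unfolding g_def steady_state_def by blast
    have "(g has_real_derivative 0) (at K0)"
      by (rule has_field_derivative_transform_within_open[of "\<lambda>_. 0" 0 K0 I])
         (use I_open K0 gz in auto)
    with g' have e1: "(\<Sum>j=1..N. A i j * sin (\<theta>0 j - \<theta>0 i))
        + K0 * (\<Sum>j=1..N. A i j * (cos (\<theta>0 j - \<theta>0 i) * (d j - d i))) = 0"
      using DERIV_unique by blast
    have e2: "\<omega> i + K0 * (\<Sum>j=1..N. A i j * sin (\<theta>0 j - \<theta>0 i)) = 0"
      using steady K0 i unfolding steady_state_def \<theta>0_def by auto
    have "jac_apply N A K0 \<theta>0 d i = K0 * (\<Sum>j=1..N. A i j * (cos (\<theta>0 j - \<theta>0 i) * (d j - d i)))"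
      unfolding jac_apply_eq[OF adj i]
      by (intro arg_cong[where f="\<lambda>x. K0 * x"] sum.cong refl) (simp add: cosc mult.assoc)
    moreover define C where "C = (\<Sum>j=1..N. A i j * (cos (\<theta>0 j - \<theta>0 i) * (d j - d i)))"
    moreover define s where "s = (\<Sum>j=1..N. A i j * sin (\<theta>0 j - \<theta>0 i))"
    ultimately have h: "jac_apply N A K0 \<theta>0 d i = K0 * C" "s + K0 * C = 0" "\<omega> i + K0 * s = 0"
      using e1 e2 by auto
    have "K0 * C = - s" using h(2) by linarith
    moreover have "s = - \<omega> i / K0" using h(3) K0pos by (simp add: field_simps)
    ultimately show ?thesis using h(1) by simp
  qed
  have sinc: "sin (a - b) = - sin (b - a)" for a b :: real by (metis sin_minus minus_diff_eq)
  have si: "(\<Sum>j=1..N. A i j * sin (\<theta>0 j - \<theta>0 i)) = - \<omega> i / K0" if i: "i \<in> {1..N}" for i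
  proof -
    have "\<omega> i + K0 * (\<Sum>j=1..N. A i j * sin (\<theta>0 j - \<theta>0 i)) = 0"
      using steady K0 i unfolding steady_state_def \<theta>0_def by auto
    then show ?thesis using K0pos by (simp add: field_simps)
  qed
  define X where "X = (\<Sum>i=1..N. \<Sum>j=1..N. A i j * (- sin (\<theta>0 i - \<theta>0 j)) * d i)"
  define T where "T = (\<Sum>i=1..N. \<Sum>j=1..N. A i j * sin (\<theta>0 i - \<theta>0 j) * d j)"
  have "T = (\<Sum>j=1..N. \<Sum>i=1..N. A i j * sin (\<theta>0 i - \<theta>0 j) * d j)"
    unfolding T_def by (rule sum.swap)
  also have "\<dots> = X" unfolding X_def
  proof (intro sum.cong refl)
    fix a b assume ab: "a \<in> {1..N}" "b \<in> {1..N}"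
    show "A b a * sin (\<theta>0 b - \<theta>0 a) * d a = A a b * (- sin (\<theta>0 a - \<theta>0 b)) * d a"
      using A01(2)[OF ab] sinc[of "\<theta>0 b" "\<theta>0 a"] by simp
  qed
  finally have TX: "T = X" .
  have "(\<Sum>i=1..N. \<Sum>j=1..N. A i j * (- sin (\<theta>0 i - \<theta>0 j) * (d i - d j)))
     = (\<Sum>i=1..N. \<Sum>j=1..N. A i j * (- sin (\<theta>0 i - \<theta>0 j)) * d i + A i j * sin (\<theta>0 i - \<theta>0 j) * d j)"
    by (intro sum.cong refl) (simp add: right_diff_distrib)
  also have "\<dots> = X + T" unfolding X_def T_def sum.distrib[symmetric] by (rule refl)
  also have "\<dots> = 2 * X" using TX by simp
  also have "X = (\<Sum>i=1..N. d i * (\<Sum>j=1..N. A i j * sin (\<theta>0 j - \<theta>0 i)))"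
    unfolding X_def sum_distrib_left
  proof (intro sum.cong refl)
    fix a b
    show "A a b * (- sin (\<theta>0 a - \<theta>0 b)) * d a = d a * (A a b * sin (\<theta>0 b - \<theta>0 a))"
      using sinc[of "\<theta>0 a" "\<theta>0 b"] by simp
  qed
  also have "\<dots> = (\<Sum>i=1..N. d i * (- \<omega> i / K0))"
    by (intro sum.cong refl) (simp only: si)
  also have "\<dots> = (- 1 / K0) * (\<Sum>i=1..N. d i * \<omega> i)"
    unfolding sum_distrib_left by (intro sum.cong refl) simp
  finally have sumid: "(\<Sum>i=1..N. \<Sum>j=1..N. A i j * (- sin (\<theta>0 i - \<theta>0 j) * (d i - d j)))
      = - 2 / K0 * (\<Sum>i=1..N. d i * \<omega> i)"
    by simp
  have lamneg: "lam n < 0" if n: "n \<in> {2..N}" for n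
  proof -
    have "\<exists>i\<in>{1..N}. v n i \<noteq> 0"
    proof (rule ccontr)
      assume "\<not> ?thesis"
      then have "(\<Sum>i=1..N. v n i * v n i) = 0" by simp
      with orth n show False by auto
    qed
    then have "is_eigenpair N A K0 (\<theta> K0) (lam n) (v n)"
      unfolding is_eigenpair_def using eig n by auto
    then show ?thesis using stab K0 eig n unfolding stable_def by force
  qed
  have vsum: "(\<Sum>i=1..N. v n i) = 0" if n: "n \<in> {2..N}" for n
  proof -
    have "(\<Sum>i=1..N. 1 * jac_apply N A K0 \<theta>0 (v n) i) = (\<Sum>i=1..N. v n i * jac_apply N A K0 \<theta>0 (\<lambda>_. 1) i)"
      by (rule jac_sym[OF adj])
    also have "\<dots> = 0" by (intro sum.neutral) (simp add: jac_apply_eq[OF adj])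
    finally have "(\<Sum>i=1..N. lam n * v n i) = 0" using eig n unfolding \<theta>0_def by simp
    then show ?thesis using eig n by (simp add: sum_distrib_left[symmetric])
  qed
  have bn: "(\<Sum>i=1..N. v n i * d i) = (\<Sum>i=1..N. v n i * \<omega> i) / (K0 * lam n)" if n: "n \<in> {2..N}" for n
  proof -
    have "(\<Sum>i=1..N. v n i * jac_apply N A K0 \<theta>0 d i) = (\<Sum>i=1..N. d i * jac_apply N A K0 \<theta>0 (v n) i)"
      by (rule jac_sym[OF adj])
    also have "\<dots> = (\<Sum>i=1..N. lam n * (v n i * d i))"
      using eig n unfolding \<theta>0_def by (intro sum.cong refl) auto
    also have "\<dots> = lam n * (\<Sum>i=1..N. v n i * d i)" by (simp add: sum_distrib_left)
    finally have "lam n * (\<Sum>i=1..N. v n i * d i) = (\<Sum>i=1..N. v n i * \<omega> i) / K0"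
      using Jd by (simp add: sum_divide_distrib)
    then show ?thesis using eig n K0pos by (simp add: field_simps)
  qed
  define c where "c = 1 / sqrt (real N)"
  define u where "u r = (if r = 1 then (\<lambda>_::nat. c) else v r)" for r
  have cc: "real N * (c * c) = 1" using N2 unfolding c_def by (simp add: field_simps)
  have on: "\<forall>r\<in>{1..N}. \<forall>s\<in>{1..N}. (\<Sum>j=1..N. u r j * u s j) = (if r = s then 1 else 0)"
  proof (intro ballI)
    fix r s assume r: "r \<in> {1..N}" and s: "s \<in> {1..N}"
    show "(\<Sum>j=1..N. u r j * u s j) = (if r = s then 1 else 0)"
    proof (cases "r = 1")
      case True
      show ?thesis
      proof (cases "s = 1")
        case True
        then show ?thesis using \<open>r = 1\<close> cc unfolding u_def by simp
      next
        case False
        then have "s \<in> {2..N}" using s by auto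
        then have "(\<Sum>j=1..N. c * v s j) = 0" using vsum by (simp add: sum_distrib_left[symmetric])
        then show ?thesis using \<open>r = 1\<close> False unfolding u_def by simp
      qed
    next
      case False
      then have r2: "r \<in> {2..N}" using r by auto
      show ?thesis
      proof (cases "s = 1")
        case True
        have "(\<Sum>j=1..N. v r j * c) = 0" using vsum[OF r2] by (simp add: sum_distrib_right[symmetric])
        then show ?thesis using True False unfolding u_def by simp
      next
        case False
        then have "s \<in> {2..N}" using s by auto
        then show ?thesis using orth r2 \<open>r \<noteq> 1\<close> False unfolding u_def by simp
      qed
    qed
  qed
  have compl: "(\<Sum>r=1..N. u r i * u r j) = (if i = j then 1 else 0)" if "i \<in> {1..N}" "j \<in> {1..N}" for i j
    by (rule ortho_complete[OF on that])
  have "(\<Sum>i=1..N. d i * \<omega> i) = (\<Sum>i=1..N. \<Sum>j=1..N. d i * \<omega> j * (if i = j then 1 else 0))"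
    by (intro sum.cong refl) (simp add: if_distrib cong: if_cong)
  also have "\<dots> = (\<Sum>i=1..N. \<Sum>j=1..N. \<Sum>r=1..N. (u r i * d i) * (u r j * \<omega> j))"
    by (intro sum.cong refl) (simp add: compl[symmetric] sum_distrib_left mult_ac)
  also have "\<dots> = (\<Sum>i=1..N. \<Sum>r=1..N. \<Sum>j=1..N. (u r i * d i) * (u r j * \<omega> j))"
    by (intro sum.cong refl sum.swap)
  also have "\<dots> = (\<Sum>r=1..N. \<Sum>i=1..N. \<Sum>j=1..N. (u r i * d i) * (u r j * \<omega> j))"
    by (rule sum.swap)
  also have "\<dots> = (\<Sum>r=1..N. (\<Sum>i=1..N. u r i * d i) * (\<Sum>j=1..N. u r j * \<omega> j))"
    by (simp add: sum_product)
  also have "\<dots> = (\<Sum>i=1..N. u 1 i * d i) * (\<Sum>j=1..N. u 1 j * \<omega> j)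
      + (\<Sum>r=2..N. (\<Sum>i=1..N. u r i * d i) * (\<Sum>j=1..N. u r j * \<omega> j))"
    using N2 by (simp add: sum.atLeast_Suc_atMost numeral_2_eq_2)
  also have "(\<Sum>j=1..N. u 1 j * \<omega> j) = 0"
    unfolding u_def using omega_sum by (simp add: sum_distrib_left[symmetric])
  also have "(\<Sum>r=2..N. (\<Sum>i=1..N. u r i * d i) * (\<Sum>j=1..N. u r j * \<omega> j))
      = (\<Sum>r=2..N. (\<Sum>i=1..N. v r i * \<omega> i)^2 / (K0 * lam r))"
  proof (intro sum.cong refl)
    fix r assume r: "r \<in> {2..N}"
    then have "u r = v r" unfolding u_def by auto
    then show "(\<Sum>i=1..N. u r i * d i) * (\<Sum>j=1..N. u r j * \<omega> j) = (\<Sum>i=1..N. v r i * \<omega> i)^2 / (K0 * lam r)"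
      using bn[OF r] by (simp add: power2_eq_square)
  qed
  finally have key: "(\<Sum>i=1..N. d i * \<omega> i) = (\<Sum>r=2..N. (\<Sum>i=1..N. v r i * \<omega> i)^2 / (K0 * lam r))"
    by simp
  define Q where "Q = (\<Sum>n=2..N. (1 / (- lam n)) * (\<Sum>i=1..N. v n i * \<omega> i)^2)"
  have "(\<Sum>r=2..N. (\<Sum>i=1..N. v r i * \<omega> i)^2 / (K0 * lam r)) = - (1 / K0) * Q"
    unfolding Q_def sum_distrib_left
  proof (intro sum.cong refl)
    fix n assume n: "n \<in> {2..N}"
    show "(\<Sum>i=1..N. v n i * \<omega> i)^2 / (K0 * lam n) = - (1 / K0) * ((1 / (- lam n)) * (\<Sum>i=1..N. v n i * \<omega> i)^2)"
      using lamneg[OF n] K0pos by (simp add: field_simps)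
  qed
  with key have dw: "(\<Sum>i=1..N. d i * \<omega> i) = - (1 / K0) * Q" by simp
  have val: "(1/S) * (\<Sum>i=1..N. \<Sum>j=1..N. A i j * (- sin (\<theta>0 i - \<theta>0 j) * (d i - d j)))
      = 2 / (K0^2 * S) * Q"
    unfolding sumid dw using K0pos by (simp add: field_simps power2_eq_square)
  have Qnn: "Q \<ge> 0" unfolding Q_def
    by (intro sum_nonneg mult_nonneg_nonneg) (use lamneg in \<open>fastforce intro: zero_le_power2\<close>)+
  have Snn: "S \<ge> 0" unfolding S_def degree_def
    by (intro sum_nonneg) (use A01(1) in force)
  have "2 / (K0^2 * S) * Q \<ge> 0" using Qnn Snn by simp
  then show ?thesis using Dr val unfolding S_def Q_def by simp
qed

end
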